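(* For all $m,n\ge 3$, the state complexity of the product (concatenation) $U_m(a,b,c)\,(U_n(a,b,c))^R$ is $(m-1)2^n+2^{n-1}-(m-1)$.
   Context: The state complexity of a regular language is the number of states of its minimal complete DFA. For $n\ge 3$, $\mathcal{U}_n(a,b,c)$ is the DFA over $\{a,b,c\}$ with states $\{0,\dots,n-1\}$, initial state $0$, final states $\{n-1\}$, where $a$ maps $i\mapsto i+1\pmod n$, $b$ swaps $0$ and $1$ fixing other states, and $c$ maps $n-1$ to $0$ fixing other states; $U_n(a,b,c)$ is its language. $L^R$ is the reversal of $L$, and $KL=\{uv: u\in K, v\in L\}$. *)

theory Defs
  imports Main
begin

datatype sym = a | b | c

definition is_dfa :: "nat set \<Rightarrow> nat \<Rightarrow> (nat \<Rightarrow> sym \<Rightarrow> nat) \<Rightarrow> nat set \<Rightarrow> bool" where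
  "is_dfa Q q0 delta F \<longleftrightarrow> finite Q \<and> q0 \<in> Q \<and> (\<forall>q\<in>Q. \<forall>x. delta q x \<in> Q) \<and> F \<subseteq> Q"

definition dfa_lang :: "nat \<Rightarrow> (nat \<Rightarrow> sym \<Rightarrow> nat) \<Rightarrow> nat set \<Rightarrow> sym list set" where
  "dfa_lang q0 delta F = {w. foldl delta q0 w \<in> F}"

definition state_complexity :: "sym list set \<Rightarrow> nat" where
  "state_complexity L = (LEAST k. \<exists>Q q0 delta F. is_dfa Q q0 delta F \<and> card Q = k \<and> dfa_lang q0 delta F = L)"

definition conc :: "sym list set \<Rightarrow> sym list set \<Rightarrow> sym list set" where
  "conc K L = {u @ v | u v. u \<in> K \<and> v \<in> L}"

definition reversal :: "sym list set \<Rightarrow> sym list set" where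
  "reversal L = rev ` L"

fun U_delta :: "nat \<Rightarrow> nat \<Rightarrow> sym \<Rightarrow> nat" where
  "U_delta n i a = (i + 1) mod n"
| "U_delta n i b = (if i = 0 then 1 else if i = 1 then 0 else i)"
| "U_delta n i c = (if i = n - 1 then 0 else i)"

definition U_dfa_states :: "nat \<Rightarrow> nat set" where
  "U_dfa_states n = {0..<n}"

definition U_lang :: "nat \<Rightarrow> sym list set" where
  "U_lang n = dfa_lang 0 (U_delta n) {n - 1}"

end

theory Submission
  imports Defs
begin

lemma transfer_dfa:
  fixes Xs :: "'a set" and d :: "'a \<Rightarrow> sym \<Rightarrow> 'a"
  assumes fin: "finite Xs" and st: "st \<in> Xs" and cl: "\<And>e x. e \<in> Xs \<Longrightarrow> d e x \<in> Xs" and F: "F \<subseteq> Xs"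
  shows "\<exists>Q q0 \<delta> F'. is_dfa Q q0 \<delta> F' \<and> card Q = card Xs \<and> dfa_lang q0 \<delta> F' = {w. foldl d st w \<in> F}"
proof -
  obtain h where h: "bij_betw h {0..<card Xs} Xs" using ex_bij_betw_nat_finite[OF fin] by blast
  define g where "g = inv_into {0..<card Xs} h"
  have g: "bij_betw g Xs {0..<card Xs}" unfolding g_def by (rule bij_betw_inv_into[OF h])
  have hg: "y \<in> Xs \<Longrightarrow> h (g y) = y" for y unfolding g_def by (rule bij_betw_inv_into_right[OF h])
  define \<delta> where "\<delta> i x = g (d (h i) x)" for i x
  have fX: "y \<in> Xs \<Longrightarrow> foldl d y w \<in> Xs" for y w
    by (induction w arbitrary: y) (auto simp: cl)
  have key: "y \<in> Xs \<Longrightarrow> foldl \<delta> (g y) w = g (foldl d y w)" for y w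
    by (induction w arbitrary: y) (auto simp: \<delta>_def hg cl)
  have gl: "y \<in> Xs \<Longrightarrow> g y < card Xs" for y using g by (auto simp: bij_betw_def)
  have hl: "i < card Xs \<Longrightarrow> h i \<in> Xs" for i using h by (auto simp: bij_betw_def)
  have "is_dfa {0..<card Xs} (g st) \<delta> (g ` F)"
    unfolding is_dfa_def using st F cl gl hl fin by (auto simp: \<delta>_def)
  moreover have "dfa_lang (g st) \<delta> (g ` F) = {w. foldl d st w \<in> F}"
  proof -
    have inj: "inj_on g Xs" using g by (auto simp: bij_betw_def)
    have "foldl \<delta> (g st) w \<in> g ` F \<longleftrightarrow> foldl d st w \<in> F" for w
      using key[OF st] fX[OF st] inj F by (auto simp: inj_on_image_mem_iff)
    then show ?thesis by (auto simp: dfa_lang_def)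
  qed
  ultimately show ?thesis by (intro exI[of _ "{0..<card Xs}"] exI[of _ "g st"] exI[of _ \<delta>] exI[of _ "g ` F"]) auto
qed

locale ctx =
  fixes m n :: nat
  assumes m3: "3 \<le> m" and n3: "3 \<le> n"
begin

definition pre :: "sym \<Rightarrow> nat set \<Rightarrow> nat set" where
  "pre x S = {p. p < n \<and> U_delta n p x \<in> S}"

definition tr :: "nat \<times> nat set \<Rightarrow> sym \<Rightarrow> nat \<times> nat set" where
  "tr e x = (U_delta m (fst e) x, pre x (snd e) \<union> (if U_delta m (fst e) x = m - 1 then {n - 1} else {}))"

definition run :: "nat \<times> nat set \<Rightarrow> sym list \<Rightarrow> nat \<times> nat set" where
  "run e w = foldl tr e w"

definition valid :: "nat \<times> nat set \<Rightarrow> bool" where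
  "valid e \<longleftrightarrow> fst e < m \<and> snd e \<subseteq> {..<n} \<and> (fst e = m - 1 \<longrightarrow> n - 1 \<in> snd e)"

definition sw :: "sym list \<Rightarrow> nat set" where
  "sw w = {p. p < n \<and> (\<exists>u v. w = u @ v \<and> foldl (U_delta m) 0 u = m - 1 \<and> foldl (U_delta n) p (rev v) = n - 1)}"

definition L :: "sym list set" where "L = conc (U_lang m) (reversal (U_lang n))"

lemma Ud_less: "q < k \<Longrightarrow> 2 \<le> k \<Longrightarrow> U_delta k q x < k"
  by (cases x) auto

lemma dn_less: "p < n \<Longrightarrow> U_delta n p x < n"
  using n3 Ud_less by auto

lemma dm_less: "q < m \<Longrightarrow> U_delta m q x < m"
  using m3 Ud_less by auto

lemma run_Cons[simp]: "run e (x # w) = run (tr e x) w"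
  by (simp add: run_def)
lemma run_Nil[simp]: "run e [] = e"
  by (simp add: run_def)
lemma run_append: "run e (u @ v) = run (run e u) v"
  by (simp add: run_def)
lemma run_snoc: "run e (w @ [x]) = tr (run e w) x"
  by (simp add: run_def)

lemma valid_tr: "valid e \<Longrightarrow> valid (tr e x)"
  using dm_less dn_less n3 by (auto simp: valid_def tr_def pre_def)

lemma valid_run: "valid e \<Longrightarrow> valid (run e w)"
  by (induction w arbitrary: e) (auto simp: valid_tr)

lemma sw_Nil: "sw [] = {}"
  using m3 by (auto simp: sw_def)

lemma sw_snoc:
  "sw (w @ [x]) = pre x (sw w) \<union> (if U_delta m (foldl (U_delta m) 0 w) x = m - 1 then {n - 1} else {})"
proof (intro set_eqI iffI)
  fix p assume "p \<in> sw (w @ [x])"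
  then obtain u v where p: "p < n" and wv: "w @ [x] = u @ v" and u: "foldl (U_delta m) 0 u = m - 1"
    and v: "foldl (U_delta n) p (rev v) = n - 1" by (auto simp: sw_def)
  show "p \<in> pre x (sw w) \<union> (if U_delta m (foldl (U_delta m) 0 w) x = m - 1 then {n - 1} else {})"
  proof (cases v rule: rev_cases)
    case Nil
    then show ?thesis using wv u v by auto
  next
    case (snoc v' y)
    with wv have "w = u @ v'" "y = x" by auto
    moreover have "foldl (U_delta n) (U_delta n p x) (rev v') = n - 1" using v snoc \<open>y = x\<close> by simp
    ultimately have "U_delta n p x \<in> sw w" using u dn_less[OF p] by (auto simp: sw_def)
    then show ?thesis using p by (auto simp: pre_def)
  qed
next
  fix p assume "p \<in> pre x (sw w) \<union> (if U_delta m (foldl (U_delta m) 0 w) x = m - 1 then {n - 1} else {})"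
  then consider "p < n" "U_delta n p x \<in> sw w" | "p = n - 1" "U_delta m (foldl (U_delta m) 0 w) x = m - 1"
    by (auto simp: pre_def split: if_splits)
  then show "p \<in> sw (w @ [x])"
  proof cases
    case 1
    then obtain u v where "w = u @ v" "foldl (U_delta m) 0 u = m - 1"
      "foldl (U_delta n) (U_delta n p x) (rev v) = n - 1" by (auto simp: sw_def)
    then show ?thesis using 1 unfolding sw_def
      by (intro CollectI conjI exI[of _ u] exI[of _ "v @ [x]"]) auto
  next
    case 2
    then show ?thesis using n3 unfolding sw_def
      by (intro CollectI conjI exI[of _ "w @ [x]"] exI[of _ "[]"]) auto
  qed
qed

lemma run_sem: "run (0, {}) w = (foldl (U_delta m) 0 w, sw w)"
proof (induction w rule: rev_induct)
  case Nil
  then show ?case by (simp add: sw_Nil)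
next
  case (snoc x w)
  then show ?case by (simp add: run_snoc tr_def sw_snoc)
qed

lemma in_L: "w \<in> L \<longleftrightarrow> 0 \<in> sw w"
proof -
  have r: "(v \<in> rev ` A) = (rev v \<in> A)" for v :: "sym list" and A
    by (metis image_iff rev_rev_ident)
  have "w \<in> L \<longleftrightarrow> (\<exists>u v. w = u @ v \<and> foldl (U_delta m) 0 u = m - 1 \<and> foldl (U_delta n) 0 (rev v) = n - 1)"
    unfolding L_def conc_def reversal_def U_lang_def dfa_lang_def by (auto simp: r)
  then show ?thesis using n3 by (auto simp: sw_def)
qed

definition Full :: "nat set" where "Full = {..<n}"

definition Vset :: "(nat \<times> nat set) set" where
  "Vset = ({..<m-1} \<times> Pow {..<n}) \<union> ({m-1} \<times> {S. S \<subseteq> {..<n} \<and> n - 1 \<in> S})"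

definition FullS :: "(nat \<times> nat set) set" where
  "FullS = (\<lambda>q. (q, Full)) ` {..<m}"

definition X :: "(nat \<times> nat set) set" where
  "X = (Vset - FullS) \<union> {(0, Full)}"

definition norm :: "nat \<times> nat set \<Rightarrow> nat \<times> nat set" where
  "norm e = (if snd e = Full then (0, Full) else e)"

definition dX :: "nat \<times> nat set \<Rightarrow> sym \<Rightarrow> nat \<times> nat set" where
  "dX e x = norm (tr e x)"

lemma Vset_valid: "e \<in> Vset \<longleftrightarrow> valid e"
  using m3 by (cases e) (auto simp: Vset_def valid_def)

lemma pre_full: "pre x Full = Full"
  using dn_less by (auto simp: pre_def Full_def)

lemma tr_full: "tr (q, Full) x = (U_delta m q x, Full)"
proof -
  have "n - 1 \<in> Full" using n3 by (simp add: Full_def)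
  then show ?thesis by (auto simp: tr_def pre_full)
qed

lemma norm_tr: "norm (tr (norm e) x) = norm (tr e x)"
  by (cases e) (auto simp: norm_def tr_full)

lemma foldl_dX: "foldl dX (0, {}) w = norm (run (0, {}) w)"
proof (induction w rule: rev_induct)
  case Nil
  then show ?case using n3 by (auto simp: norm_def Full_def)
next
  case (snoc x w)
  then show ?case by (simp add: run_snoc dX_def norm_tr)
qed

lemma valid_init: "valid (0, {})"
  using m3 by (auto simp: valid_def)

lemma norm_in_X: "valid e \<Longrightarrow> norm e \<in> X"
  by (cases e) (auto simp: norm_def X_def Vset_valid FullS_def)

lemma X_valid: "e \<in> X \<Longrightarrow> valid e"
  using m3 n3 by (auto simp: X_def Vset_valid valid_def Full_def)

lemma X_norm: "e \<in> X \<Longrightarrow> norm e = e"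
  by (cases e) (auto simp: X_def norm_def FullS_def Vset_valid valid_def)

lemma finite_Vset: "finite Vset"
  by (auto simp: Vset_def)

lemma finite_X: "finite X"
  using finite_Vset by (auto simp: X_def)

lemma card_B: "card {S. S \<subseteq> {..<n} \<and> n - 1 \<in> S} = 2 ^ (n - 1)"
proof -
  have "{S. S \<subseteq> {..<n} \<and> n - 1 \<in> S} = insert (n - 1) ` Pow {..<n-1}"
  proof (intro set_eqI iffI)
    fix S assume S: "S \<in> {S. S \<subseteq> {..<n} \<and> n - 1 \<in> S}"
    then have "S = insert (n-1) (S - {n-1})" "S - {n-1} \<in> Pow {..<n-1}" by auto
    then show "S \<in> insert (n - 1) ` Pow {..<n-1}" by blast
  next
    fix S assume "S \<in> insert (n - 1) ` Pow {..<n-1}"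
    then show "S \<in> {S. S \<subseteq> {..<n} \<and> n - 1 \<in> S}" using n3 by auto
  qed
  moreover have "inj_on (insert (n - 1)) (Pow {..<n-1})"
    unfolding inj_on_def by (metis Diff_insert_absorb PowD lessThan_iff less_irrefl subsetD)
  ultimately have "card {S. S \<subseteq> {..<n} \<and> n - 1 \<in> S} = card (Pow {..<n-1})"
    by (simp add: card_image)
  also have "\<dots> = 2 ^ (n - 1)" by (simp add: card_Pow)
  finally show ?thesis .
qed

lemma card_Vset: "card Vset = (m - 1) * 2 ^ n + 2 ^ (n - 1)"
proof -
  have "card Vset = card ({..<m-1} \<times> Pow {..<n}) + card ({m-1} \<times> {S. S \<subseteq> {..<n} \<and> n - 1 \<in> S})"
    unfolding Vset_def by (rule card_Un_disjoint) auto
  also have "\<dots> = (m - 1) * 2 ^ n + 2 ^ (n - 1)"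
    using card_B by (simp add: card_cartesian_product card_Pow)
  finally show ?thesis .
qed

lemma card_X: "card X = (m - 1) * 2 ^ n + 2 ^ (n - 1) - (m - 1)"
proof -
  have sub: "FullS \<subseteq> Vset" using m3 n3 by (auto simp: FullS_def Vset_valid valid_def Full_def)
  have cF: "card FullS = m" unfolding FullS_def by (simp add: card_image inj_on_def)
  have "card X = card (Vset - FullS) + 1"
    unfolding X_def using finite_Vset m3 by (subst card_Un_disjoint) (auto simp: FullS_def)
  also have "card (Vset - FullS) = card Vset - m"
    using sub finite_Vset cF by (simp add: card_Diff_subset finite_subset)
  finally have "card X = (m - 1) * 2 ^ n + 2 ^ (n - 1) - m + 1" by (simp add: card_Vset)
  moreover have "m \<le> (m - 1) * 2 ^ n + 2 ^ (n - 1)"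
  proof -
    have "m - 1 \<le> (m - 1) * 2 ^ n" by simp
    moreover have "1 \<le> (2::nat) ^ (n - 1)" by simp
    ultimately show ?thesis by linarith
  qed
  ultimately show ?thesis using m3 by linarith
qed


end


context ctx
begin

lemma upper: "\<exists>Q q0 \<delta> F. is_dfa Q q0 \<delta> F \<and> card Q = card X \<and> dfa_lang q0 \<delta> F = L"
proof -
  have x0: "(0, {}) \<in> X"
  proof -
    have "norm (0, {}) = (0, {})" using n3 by (auto simp: norm_def Full_def)
    then show ?thesis using norm_in_X[OF valid_init] by simp
  qed
  have cl: "e \<in> X \<Longrightarrow> dX e x \<in> X" for e x
    unfolding dX_def by (rule norm_in_X[OF valid_tr[OF X_valid]])
  obtain Q q0 \<delta> F where D: "is_dfa Q q0 \<delta> F" "card Q = card X"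
    "dfa_lang q0 \<delta> F = {w. foldl dX (0, {}) w \<in> {e \<in> X. 0 \<in> snd e}}"
    using transfer_dfa[where Xs=X and d=dX and st="(0,{})" and F="{e \<in> X. 0 \<in> snd e}"] finite_X x0 cl by blast
  have "foldl dX (0, {}) w \<in> {e \<in> X. 0 \<in> snd e} \<longleftrightarrow> w \<in> L" for w
  proof -
    have v: "valid (run (0, {}) w)" by (rule valid_run[OF valid_init])
    have "foldl dX (0, {}) w \<in> X" unfolding foldl_dX by (rule norm_in_X[OF v])
    moreover have "0 \<in> snd (norm (run (0, {}) w)) \<longleftrightarrow> 0 \<in> sw w"
      using n3 by (auto simp: norm_def run_sem Full_def)
    ultimately show ?thesis by (simp add: foldl_dX in_L)
  qed
  then have "dfa_lang q0 \<delta> F = L" using D(3) by auto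
  then show ?thesis using D by blast
qed

definition indist :: "nat \<times> nat set \<Rightarrow> nat \<times> nat set \<Rightarrow> bool" where
  "indist e1 e2 \<longleftrightarrow> (\<forall>z. (0 \<in> snd (run e1 z)) = (0 \<in> snd (run e2 z)))"

lemma indist_tr: "indist e1 e2 \<Longrightarrow> indist (tr e1 x) (tr e2 x)"
  unfolding indist_def by (metis run_Cons)

lemma indist_sym: "indist e1 e2 \<Longrightarrow> indist e2 e1"
  unfolding indist_def by metis

lemma a_rep: "t + j < n \<Longrightarrow> (t \<in> snd (run e (replicate j a)) \<longleftrightarrow> t + j \<in> snd e)"
proof (induction j arbitrary: e)
  case 0
  then show ?case by simp
next
  case (Suc j)
  have "t \<in> snd (run e (replicate (Suc j) a)) \<longleftrightarrow> t + j \<in> snd (tr e a)"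
    using Suc by simp
  also have "\<dots> \<longleftrightarrow> t + Suc j \<in> snd e"
    using Suc.prems by (auto simp: tr_def pre_def)
  finally show ?case .
qed

lemma indist_snd:
  assumes "indist e1 e2" "snd e1 \<subseteq> {..<n}" "snd e2 \<subseteq> {..<n}"
  shows "snd e1 = snd e2"
proof (rule ccontr)
  assume "snd e1 \<noteq> snd e2"
  then obtain p where p: "p < n" "p \<in> snd e1 \<longleftrightarrow> p \<notin> snd e2" using assms(2,3) by blast
  have "0 \<in> snd (run e1 (replicate p a)) \<longleftrightarrow> p \<in> snd e1" using a_rep[of 0 p] p by simp
  moreover have "0 \<in> snd (run e2 (replicate p a)) \<longleftrightarrow> p \<in> snd e2" using a_rep[of 0 p] p by simp
  ultimately show False using assms(1) p(2) unfolding indist_def by blast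
qed

definition G :: "nat \<Rightarrow> nat \<Rightarrow> nat \<Rightarrow> bool" where
  "G x y r \<longleftrightarrow> (\<exists>S. indist (x, S) (y, S) \<and> valid (x, S) \<and> valid (y, S) \<and> x \<noteq> y \<and> r < n \<and> r \<notin> S)"

lemma G_bounds: "G x y r \<Longrightarrow> x < m \<and> y < m \<and> x \<noteq> y \<and> r < n"
  by (auto simp: G_def valid_def)

lemma G_sym: "G x y r \<Longrightarrow> G y x r"
  unfolding G_def using indist_sym by blast

lemma G_end: "G (m - 1) y (n - 1) \<Longrightarrow> False"
  by (auto simp: G_def valid_def)

lemma G_a: assumes "G x y r" shows "G ((x + 1) mod m) ((y + 1) mod m) ((r + (n - 1)) mod n)"
proof -
  obtain S where S: "indist (x, S) (y, S)" "valid (x, S)" "valid (y, S)" "x \<noteq> y" "r < n" "r \<notin> S"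
    using assms by (auto simp: G_def)
  define x' where "x' = (x + 1) mod m"
  define y' where "y' = (y + 1) mod m"
  have xy: "x < m" "y < m" using S by (auto simp: valid_def)
  have ne: "x' \<noteq> y'"
    using xy S(4) unfolding x'_def y'_def by (auto simp: mod_Suc split: if_splits)
  have tx: "tr (x, S) a = (x', pre a S \<union> (if x' = m - 1 then {n - 1} else {}))"
    by (simp add: tr_def x'_def)
  have ty: "tr (y, S) a = (y', pre a S \<union> (if y' = m - 1 then {n - 1} else {}))"
    by (simp add: tr_def y'_def)
  have I: "indist (tr (x, S) a) (tr (y, S) a)" by (rule indist_tr[OF S(1)])
  have eq: "pre a S \<union> (if x' = m - 1 then {n - 1} else {}) = pre a S \<union> (if y' = m - 1 then {n - 1} else {})"
    using indist_snd[OF I] valid_tr[OF S(2), of a] valid_tr[OF S(3), of a] tx ty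
    by (auto simp: valid_def)
  have eqx: "pre a S \<union> (if x' = m - 1 then {n - 1} else {}) = pre a S"
    using eq ne by (auto split: if_splits)
  have eqy: "pre a S \<union> (if y' = m - 1 then {n - 1} else {}) = pre a S"
    using eq ne by (auto split: if_splits)
  have r': "(r + (n - 1)) mod n \<notin> pre a S"
  proof -
    have "((r + (n - 1)) mod n + 1) mod n = (r + (n - 1) + 1) mod n" by (simp add: mod_Suc_eq)
    also have "r + (n - 1) + 1 = r + n" using n3 by simp
    also have "(r + n) mod n = r" using S(5) by simp
    finally show ?thesis using S(6) by (auto simp: pre_def)
  qed
  have "indist (x', pre a S) (y', pre a S)" using I tx ty eqx eqy by simp
  moreover have "valid (x', pre a S)" "valid (y', pre a S)"
    using valid_tr[OF S(2), of a] valid_tr[OF S(3), of a] tx ty eqx eqy by simp_all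
  moreover have "(r + (n - 1)) mod n < n" using n3 by simp
  ultimately show ?thesis unfolding G_def x'_def[symmetric] y'_def[symmetric] using ne r' by blast
qed

lemma G_c: assumes "G (m - 1) y r" "y \<noteq> 0" shows "G 0 y r"
proof -
  obtain S where S: "indist (m - 1, S) (y, S)" "valid (m - 1, S)" "valid (y, S)" "m - 1 \<noteq> y" "r < n" "r \<notin> S"
    using assms by (auto simp: G_def)
  have tx: "tr (m - 1, S) c = (0, pre c S)" using m3 by (simp add: tr_def)
  have ty: "tr (y, S) c = (y, pre c S)" using S(4) by (simp add: tr_def)
  have "n - 1 \<in> S" using S(2) by (simp add: valid_def)
  then have "r \<noteq> n - 1" using S(6) by auto
  then have r': "r \<notin> pre c S" using S(6) by (simp add: pre_def)
  have "indist (0, pre c S) (y, pre c S)" using indist_tr[OF S(1), of c] tx ty by simp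
  moreover have "valid (0, pre c S)" "valid (y, pre c S)"
    using valid_tr[OF S(2), of c] valid_tr[OF S(3), of c] tx ty by simp_all
  ultimately show ?thesis unfolding G_def using r' assms(2) S(5) by blast
qed

end


context ctx
begin

lemma add_Suc_mult: "r + k * d + d = r + Suc k * (d::nat)" by simp

lemma G_ak: "G x y r \<Longrightarrow> G ((x + k) mod m) ((y + k) mod m) ((r + k * (n - 1)) mod n)"
proof (induction k)
  case 0
  then show ?case using G_bounds[OF 0] by simp
next
  case (Suc k)
  have "G (((x + k) mod m + 1) mod m) (((y + k) mod m + 1) mod m) (((r + k * (n - 1)) mod n + (n - 1)) mod n)"
    by (rule G_a[OF Suc.IH[OF Suc.prems]])
  moreover have "((x + k) mod m + 1) mod m = (x + Suc k) mod m" by (simp add: mod_Suc_eq)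
  moreover have "((y + k) mod m + 1) mod m = (y + Suc k) mod m" by (simp add: mod_Suc_eq)
  moreover have "((r + k * (n - 1)) mod n + (n - 1)) mod n = (r + Suc k * (n - 1)) mod n"
  proof -
    have "((r + k * (n - 1)) mod n + (n - 1)) mod n = (r + k * (n - 1) + (n - 1)) mod n"
      by (simp add: mod_add_left_eq)
    then show ?thesis by (simp only: add_Suc_mult)
  qed
  ultimately show ?case by simp
qed

lemma G_norm: assumes "G x y r" shows "\<exists>y' r'. G (m - 1) y' r' \<and> 0 < y' \<and> y' < m - 1"
proof -
  have b: "x < m" "y < m" "x \<noteq> y" "r < n" using G_bounds[OF assms] by auto
  define y1 where "y1 = (y + (m - 1 - x)) mod m"
  have "G ((x + (m - 1 - x)) mod m) y1 ((r + (m - 1 - x) * (n - 1)) mod n)"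
    unfolding y1_def by (rule G_ak[OF assms])
  moreover have "(x + (m - 1 - x)) mod m = m - 1" using b m3 by simp
  ultimately have g1: "G (m - 1) y1 ((r + (m - 1 - x) * (n - 1)) mod n)" by simp
  then have "y1 < m" "y1 \<noteq> m - 1" using G_bounds by auto
  show ?thesis
  proof (cases "y1 = 0")
    case False
    then show ?thesis using g1 \<open>y1 < m\<close> \<open>y1 \<noteq> m - 1\<close> by (intro exI conjI) auto
  next
    case True
    define r1 where "r1 = (r + (m - 1 - x) * (n - 1)) mod n"
    have "G ((m - 1 + (m - 1)) mod m) ((0 + (m - 1)) mod m) ((r1 + (m - 1) * (n - 1)) mod n)"
      using G_ak[of "m - 1" 0 r1 "m - 1"] g1 True r1_def by simp
    moreover have "(m - 1 + (m - 1)) mod m = m - 2"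
    proof -
      have e: "m - 1 + (m - 1) = (m - 2) + 1 * m" using m3 by simp
      have "(m - 1 + (m - 1)) mod m = ((m - 2) + 1 * m) mod m" by (simp only: e)
      also have "\<dots> = (m - 2) mod m" by (rule mod_mult_self1)
      also have "\<dots> = m - 2" using m3 by simp
      finally show ?thesis .
    qed
    moreover have "(0 + (m - 1)) mod m = m - 1" using m3 by simp
    ultimately have "G (m - 2) (m - 1) ((r1 + (m - 1) * (n - 1)) mod n)" by simp
    then have "G (m - 1) (m - 2) ((r1 + (m - 1) * (n - 1)) mod n)" by (rule G_sym)
    then show ?thesis using m3 by (intro exI conjI) auto
  qed
qed

lemma G_D: assumes "G (m - 1) y r" "0 < y" "y < m - 1"
  shows "G (m - 1) y ((r + (m - 1) * (n - 1)) mod n)"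
proof -
  have g0: "G 0 y r" using G_c assms by auto
  define e where "e = m - 1 - y"
  have e: "e < m" "e \<noteq> 0" "e + y = m - 1" using assms m3 unfolding e_def by auto
  define r1 where "r1 = (r + e * (n - 1)) mod n"
  have "G ((0 + e) mod m) ((y + e) mod m) r1" unfolding r1_def by (rule G_ak[OF g0])
  then have "G e (m - 1) r1" using e m3 by (simp add: add.commute)
  then have "G (m - 1) e r1" by (rule G_sym)
  then have "G 0 e r1" using G_c e by auto
  then have "G e 0 r1" by (rule G_sym)
  from G_ak[OF this, of y] have "G ((e + y) mod m) ((0 + y) mod m) ((r1 + y * (n - 1)) mod n)" .
  moreover have "(e + y) mod m = m - 1" using e m3 by simp
  moreover have "(0 + y) mod m = y" using assms m3 by simp
  moreover have "(r1 + y * (n - 1)) mod n = (r + (m - 1) * (n - 1)) mod n"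
  proof -
    have "(r1 + y * (n - 1)) mod n = (r + e * (n - 1) + y * (n - 1)) mod n"
      unfolding r1_def by (simp add: mod_add_left_eq)
    also have "r + e * (n - 1) + y * (n - 1) = r + (m - 1) * (n - 1)"
      using e(3) by (metis add.assoc add_mult_distrib)
    finally show ?thesis .
  qed
  ultimately show ?thesis by simp
qed

lemma arith1: "(r + (m - 1) * (n - 1) + (n - 1) * m * (n - 1)) mod n = (r + 1) mod n"
proof -
  obtain M where M: "m = Suc M" using m3 by (cases m) auto
  obtain N where N: "n = Suc N" using n3 by (cases n) auto
  note MN = M N
  have "1 \<le> Suc M * N" using MN n3 by simp
  then obtain P where P: "Suc M * N = Suc P" by (cases "Suc M * N") auto
  have h: "r + (m - 1) * (n - 1) + (n - 1) * m * (n - 1) = (r + 1) + n * P"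
    using P unfolding MN by (simp add: algebra_simps)
  show ?thesis unfolding h by simp
qed

lemma G_P: assumes "G (m - 1) y r" "0 < y" "y < m - 1"
  shows "G (m - 1) y ((r + 1) mod n)"
proof -
  define r2 where "r2 = (r + (m - 1) * (n - 1)) mod n"
  have "G (m - 1) y r2" unfolding r2_def by (rule G_D[OF assms])
  from G_ak[OF this, of "(n - 1) * m"]
  have "G ((m - 1 + (n - 1) * m) mod m) ((y + (n - 1) * m) mod m) ((r2 + (n - 1) * m * (n - 1)) mod n)" .
  moreover have "(m - 1 + (n - 1) * m) mod m = m - 1"
  proof -
    have "(m - 1 + (n - 1) * m) mod m = (m - 1) mod m" by (rule mod_mult_self1)
    also have "\<dots> = m - 1" using m3 by simp
    finally show ?thesis .
  qed
  moreover have "(y + (n - 1) * m) mod m = y" using assms m3 by simp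
  moreover have "(r2 + (n - 1) * m * (n - 1)) mod n = (r + 1) mod n"
  proof -
    have "(r2 + (n - 1) * m * (n - 1)) mod n = (r + (m - 1) * (n - 1) + (n - 1) * m * (n - 1)) mod n"
      unfolding r2_def by (simp add: mod_add_left_eq)
    then show ?thesis using arith1 by simp
  qed
  ultimately show ?thesis by simp
qed

lemma G_Pk: assumes "G (m - 1) y r" "0 < y" "y < m - 1"
  shows "G (m - 1) y ((r + k) mod n)"
proof (induction k)
  case 0
  then show ?case using assms(1) G_bounds[OF assms(1)] by simp
next
  case (Suc k)
  from G_P[OF Suc assms(2,3)] show ?case by (simp add: mod_Suc_eq)
qed

lemma G_false: "G x y r \<Longrightarrow> False"
proof -
  assume "G x y r"
  then obtain y' r' where g: "G (m - 1) y' r'" "0 < y'" "y' < m - 1" using G_norm by blast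
  have "r' < n" using G_bounds[OF g(1)] by simp
  from G_Pk[OF g, of "n - 1 - r'"] have "G (m - 1) y' ((r' + (n - 1 - r')) mod n)" .
  moreover have "(r' + (n - 1 - r')) mod n = n - 1" using \<open>r' < n\<close> by simp
  ultimately show False using G_end by simp
qed

lemma distinct_q:
  assumes "indist (x, S) (y, S)" "valid (x, S)" "valid (y, S)" "x \<noteq> y" "S \<noteq> Full"
  shows False
proof -
  have "S \<subseteq> {..<n}" using assms(2) by (simp add: valid_def)
  then obtain r where "r < n" "r \<notin> S" using assms(5) unfolding Full_def by blast
  then have "G x y r" unfolding G_def using assms by blast
  then show False by (rule G_false)
qed

end


context ctx
begin

definition reach :: "nat \<times> nat set \<Rightarrow> bool" where
  "reach e \<longleftrightarrow> (\<exists>w. run (0, {}) w = e)"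

lemma reach_init: "reach (0, {})"
  unfolding reach_def by (metis run_Nil)

lemma reach_tr: "reach e \<Longrightarrow> reach (tr e x)"
  unfolding reach_def by (metis run_snoc)

lemma tr_a_low: "q + 1 < m - 1 \<Longrightarrow> tr (q, S) a = (q + 1, pre a S)"
  by (simp add: tr_def)

lemma tr_a_top: "tr (m - 2, S) a = (m - 1, pre a S \<union> {n - 1})"
  using m3 by (simp add: tr_def Suc_diff_Suc numeral_2_eq_2)

lemma tr_a_wrap: "tr (m - 1, S) a = (0, pre a S)"
  using m3 by (simp add: tr_def)

lemma tr_b_0: "tr (0, S) b = (1, pre b S)"
  using m3 by (auto simp: tr_def)

lemma tr_b_1: "tr (1, S) b = (0, pre b S)"
  using m3 by (auto simp: tr_def)

lemma tr_b_top: "tr (m - 1, S) b = (m - 1, pre b S \<union> {n - 1})"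
  using m3 by (simp add: tr_def)

lemma tr_c_top: "tr (m - 1, S) c = (0, pre c S)"
  using m3 by (simp add: tr_def)

lemma tr_c_low: "q \<noteq> m - 1 \<Longrightarrow> tr (q, S) c = (q, pre c S)"
  by (simp add: tr_def)

definition HH :: "nat set \<Rightarrow> nat set" where "HH U = pre b (pre a U)"
definition DD :: "nat set \<Rightarrow> nat set" where "DD U = pre b (pre c (pre a U))"

lemma reach_HH: "reach (0, U) \<Longrightarrow> reach (0, HH U)"
proof -
  assume r: "reach (0, U)"
  have "tr (0, U) a = (1, pre a U)" using tr_a_low[of 0 U] m3 by simp
  then have "reach (1, pre a U)" using reach_tr[OF r, of a] by simp
  from reach_tr[OF this, of b] show ?thesis using m3 by (simp add: tr_def HH_def)
qed

lemma reach_DD: "reach (0, U) \<Longrightarrow> reach (0, DD U)"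
proof -
  assume r: "reach (0, U)"
  have "tr (0, U) a = (1, pre a U)" using tr_a_low[of 0 U] m3 by simp
  then have "reach (1, pre a U)" using reach_tr[OF r, of a] by simp
  from reach_tr[OF this, of c] have "reach (1, pre c (pre a U))" using tr_c_low[of 1] m3 by simp
  from reach_tr[OF this, of b] show ?thesis using m3 by (simp add: tr_def DD_def)
qed

lemma HH_mem: "p < n \<Longrightarrow> (p \<in> HH U \<longleftrightarrow> (if p = 1 then 1 \<in> U else if p = n - 1 then 0 \<in> U else if p = 0 then 2 \<in> U else Suc p \<in> U))"
  using n3 by (auto simp: HH_def pre_def numeral_2_eq_2)

lemma DD_mem: "p < n \<Longrightarrow> (p \<in> DD U \<longleftrightarrow> (if p = 1 then 1 \<in> U else if p = n - 1 then 1 \<in> U else if p = 0 then 2 \<in> U else Suc p \<in> U))"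
  using n3 by (auto simp: DD_def pre_def numeral_2_eq_2)

end


context ctx
begin

definition elt :: "nat \<Rightarrow> nat" where "elt r = (if r = 0 then 0 else Suc r)"
definition rk :: "nat \<Rightarrow> nat" where "rk p = (if p = 0 then 0 else p - 1)"

definition WW :: "nat set \<Rightarrow> nat set \<Rightarrow> nat \<Rightarrow> nat set" where
  "WW U V t = {p. p < n \<and> (if p = 1 then 1 \<in> U else if rk p + t < n - 1 then elt (rk p + t) \<in> U else elt (rk p + t - (n - 1)) \<in> V)}"

lemma HH_sub: "HH U \<subseteq> {..<n}" by (auto simp: HH_def pre_def)
lemma DD_sub: "DD U \<subseteq> {..<n}" by (auto simp: DD_def pre_def)

lemma WW_step:
  assumes t: "t < n - 1"
    and cond: "(elt t \<in> U) \<noteq> (elt t \<in> V) \<Longrightarrow> (elt t \<in> V \<longleftrightarrow> 1 \<in> U)"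
  shows "WW U V (Suc t) = (if (elt t \<in> U \<longleftrightarrow> elt t \<in> V) then HH (WW U V t) else DD (WW U V t))"
proof (rule set_eqI)
  fix p
  show "p \<in> WW U V (Suc t) \<longleftrightarrow> p \<in> (if (elt t \<in> U \<longleftrightarrow> elt t \<in> V) then HH (WW U V t) else DD (WW U V t))"
  proof (cases "p < n")
    case False
    then show ?thesis using HH_sub DD_sub by (auto simp: WW_def)
  next
    case True
    have m1: "1 \<in> WW U V t \<longleftrightarrow> 1 \<in> U" using n3 by (simp add: WW_def)
    have m0: "0 \<in> WW U V t \<longleftrightarrow> elt t \<in> U" using n3 t by (simp add: WW_def rk_def)
    have m2: "2 \<in> WW U V t \<longleftrightarrow> (if 1 + t < n - 1 then elt (1 + t) \<in> U else elt (1 + t - (n - 1)) \<in> V)"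
      using n3 by (simp add: WW_def rk_def)
    have mS: "Suc p \<in> WW U V t \<longleftrightarrow> (if p + t < n - 1 then elt (p + t) \<in> U else elt (p + t - (n - 1)) \<in> V)"
      if "2 \<le> p" "p < n - 1" for p
      using that n3 by (auto simp: WW_def rk_def)
    consider "p = 1" | "p = n - 1" | "p = 0" | "2 \<le> p" "p < n - 1" using True n3 by linarith
    then show ?thesis
    proof cases
      case 1
      then show ?thesis using m1 n3 True by (auto simp: WW_def HH_mem DD_mem)
    next
      case 2
      have "p \<noteq> 1" "p \<noteq> 0" using 2 n3 by auto
      have rkp: "rk p = n - 2" using 2 n3 by (simp add: rk_def)
      have e1: "\<not> (n - 2 + Suc t < n - 1)" using n3 by simp
      have e2: "n - 2 + Suc t - (n - 1) = t" using n3 by simp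
      have "p \<in> WW U V (Suc t) \<longleftrightarrow> (if rk p + Suc t < n - 1 then elt (rk p + Suc t) \<in> U else elt (rk p + Suc t - (n - 1)) \<in> V)"
        unfolding WW_def using True \<open>p \<noteq> 1\<close> by simp
      also have "\<dots> \<longleftrightarrow> elt t \<in> V" unfolding rkp if_not_P[OF e1] e2 by (rule refl)
      finally have lhs: "p \<in> WW U V (Suc t) \<longleftrightarrow> elt t \<in> V" .
      then show ?thesis using lhs 2 m0 m1 cond True n3 \<open>p \<noteq> 1\<close> by (auto simp: HH_mem DD_mem)
    next
      case 3
      have lhs: "p \<in> WW U V (Suc t) \<longleftrightarrow> (if 1 + t < n - 1 then elt (1 + t) \<in> U else elt (1 + t - (n - 1)) \<in> V)"
        using 3 n3 by (simp add: WW_def rk_def)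
      have "p \<noteq> 1" "p \<noteq> n - 1" using 3 n3 by auto
      then show ?thesis using lhs 3 m2 True by (auto simp: HH_mem DD_mem)
    next
      case 4
      have lhs: "p \<in> WW U V (Suc t) \<longleftrightarrow> (if p + t < n - 1 then elt (p + t) \<in> U else elt (p + t - (n - 1)) \<in> V)"
        using 4 n3 True by (simp add: WW_def rk_def)
      have "p \<noteq> 1" "p \<noteq> n - 1" "p \<noteq> 0" using 4 n3 by auto
      then show ?thesis using lhs 4 mS[OF 4] True by (auto simp: HH_mem DD_mem)
    qed
  qed
qed

lemma elt_rk: "p \<noteq> 1 \<Longrightarrow> elt (rk p) = p"
  by (auto simp: elt_def rk_def)

lemma rk_less: "p < n \<Longrightarrow> p \<noteq> 1 \<Longrightarrow> rk p < n - 1"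
  using n3 by (auto simp: rk_def)

lemma WW_0: assumes "U \<subseteq> {..<n}" shows "WW U V 0 = U"
proof (rule set_eqI)
  fix p show "p \<in> WW U V 0 \<longleftrightarrow> p \<in> U"
    using assms rk_less[of p] elt_rk[of p] n3 by (cases "p < n") (auto simp: WW_def)
qed

lemma WW_N: assumes "V \<subseteq> {..<n}" "1 \<in> U \<longleftrightarrow> 1 \<in> V" shows "WW U V (n - 1) = V"
proof (rule set_eqI)
  fix p show "p \<in> WW U V (n - 1) \<longleftrightarrow> p \<in> V"
    using assms elt_rk[of p] n3 by (cases "p < n") (auto simp: WW_def)
qed

lemma REG:
  assumes r: "reach (0, U)" and U: "U \<subseteq> {..<n}" and V: "V \<subseteq> {..<n}" and one: "1 \<in> U \<longleftrightarrow> 1 \<in> V"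
    and cond: "\<And>t. t < n - 1 \<Longrightarrow> (elt t \<in> U) \<noteq> (elt t \<in> V) \<Longrightarrow> (elt t \<in> V \<longleftrightarrow> 1 \<in> U)"
  shows "reach (0, V)"
proof -
  have "t \<le> n - 1 \<Longrightarrow> reach (0, WW U V t)" for t
  proof (induction t)
    case 0
    then show ?case using r WW_0[OF U] by simp
  next
    case (Suc t)
    then have t: "t < n - 1" by simp
    have "reach (0, WW U V t)" using Suc by simp
    then show ?case using WW_step[OF t cond[OF t]] reach_HH reach_DD by auto
  qed
  then show ?thesis using WW_N[OF V one] by (metis order_refl)
qed

lemma elt_props: "t < n - 1 \<Longrightarrow> elt t < n \<and> elt t \<noteq> 1"
  by (auto simp: elt_def)

end


context ctx
begin

definition postA :: "nat set \<Rightarrow> nat set" where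
  "postA S = {p. p < n \<and> (p + (n - 1)) mod n \<in> S}"

lemma modfact1: "p < n \<Longrightarrow> ((p + 1) mod n + (n - 1)) mod n = p"
proof -
  assume p: "p < n"
  have "((p + 1) mod n + (n - 1)) mod n = (p + 1 + (n - 1)) mod n" by (simp add: mod_add_left_eq)
  also have "p + 1 + (n - 1) = p + n" using n3 by simp
  finally show ?thesis using p by simp
qed

lemma modfact2: "p < n \<Longrightarrow> ((p + (n - 1)) mod n + 1) mod n = p"
proof -
  assume p: "p < n"
  have "((p + (n - 1)) mod n + 1) mod n = (p + (n - 1) + 1) mod n" by (simp add: mod_Suc_eq)
  also have "p + (n - 1) + 1 = p + n" using n3 by simp
  finally show ?thesis using p by simp
qed

lemma pre_a_def': "pre a S = {p. p < n \<and> (p + 1) mod n \<in> S}"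
  by (simp add: pre_def)

lemma pre_postA: "S \<subseteq> {..<n} \<Longrightarrow> pre a (postA S) = S"
  using modfact1 by (auto simp: pre_a_def' postA_def)

lemma postA_sub: "postA S \<subseteq> {..<n}"
  by (auto simp: postA_def)

lemma postA_iter_sub: "S \<subseteq> {..<n} \<Longrightarrow> (postA ^^ k) S \<subseteq> {..<n}"
  by (induction k) (auto simp: postA_def)

lemma postA_single: "x < n \<Longrightarrow> postA {x} = {(x + 1) mod n}"
proof (intro set_eqI iffI)
  fix p assume x: "x < n" and "p \<in> postA {x}"
  then have p: "p < n" "(p + (n - 1)) mod n = x" by (auto simp: postA_def)
  then show "p \<in> {(x + 1) mod n}" using modfact2[OF p(1)] by simp
next
  fix p assume x: "x < n" and "p \<in> {(x + 1) mod n}"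
  then show "p \<in> postA {x}" using modfact1[OF x] n3 by (auto simp: postA_def)
qed

lemma postA_co: "postA ({..<n} - T) = {..<n} - postA T"
  using n3 by (auto simp: postA_def)

lemma postA_iter_single: "x < n \<Longrightarrow> (postA ^^ k) {x} = {(x + k) mod n}"
proof (induction k)
  case 0
  then show ?case by simp
next
  case (Suc k)
  have "(postA ^^ Suc k) {x} = postA {(x + k) mod n}" using Suc by simp
  also have "\<dots> = {((x + k) mod n + 1) mod n}" using n3 by (simp add: postA_single)
  also have "((x + k) mod n + 1) mod n = (x + Suc k) mod n" by (simp add: mod_Suc_eq)
  finally show ?case .
qed

lemma postA_iter_co: "x < n \<Longrightarrow> (postA ^^ k) ({..<n} - {x}) = {..<n} - {(x + k) mod n}"
proof (induction k)
  case 0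
  then show ?case by simp
next
  case (Suc k)
  have "(postA ^^ Suc k) ({..<n} - {x}) = postA ({..<n} - {(x + k) mod n})" using Suc by simp
  also have "\<dots> = {..<n} - {((x + k) mod n + 1) mod n}" using n3 by (simp add: postA_co postA_single)
  also have "((x + k) mod n + 1) mod n = (x + Suc k) mod n" by (simp add: mod_Suc_eq)
  finally show ?case .
qed

lemma postA_iter_empty: "(postA ^^ k) {} = {}"
  by (induction k) (auto simp: postA_def)

lemma up: "q + 1 < m - 1 \<Longrightarrow> reach (q, postA S) \<Longrightarrow> S \<subseteq> {..<n} \<Longrightarrow> reach (q + 1, S)"
  using reach_tr[of "(q, postA S)" a] tr_a_low[of q "postA S"] pre_postA by simp

lemma up_k: "k \<le> m - 2 \<Longrightarrow> S \<subseteq> {..<n} \<Longrightarrow> reach (0, (postA ^^ k) S) \<Longrightarrow> reach (k, S)"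
proof (induction k arbitrary: S)
  case 0
  then show ?case by simp
next
  case (Suc k)
  have "reach (0, (postA ^^ k) (postA S))" using Suc.prems(3) by (simp add: funpow_swap1)
  then have "reach (k, postA S)" using Suc.IH[of "postA S"] Suc.prems postA_sub by simp
  then show ?case using up[of k S] Suc.prems m3 by simp
qed

lemma top: "reach (m - 2, postA S) \<Longrightarrow> S \<subseteq> {..<n} \<Longrightarrow> n - 1 \<in> S \<Longrightarrow> reach (m - 1, S)"
proof -
  assume r: "reach (m - 2, postA S)" and S: "S \<subseteq> {..<n}" "n - 1 \<in> S"
  from reach_tr[OF r, of a] have "reach (m - 1, pre a (postA S) \<union> {n - 1})" by (simp add: tr_a_top)
  then show ?thesis using S pre_postA insert_absorb by fastforce
qed

lemma pre_a_single: "x < n \<Longrightarrow> pre a {x} = {(x + (n - 1)) mod n}"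
proof (intro set_eqI iffI)
  fix p assume x: "x < n" and "p \<in> pre a {x}"
  then have p: "p < n" "(p + 1) mod n = x" by (auto simp: pre_a_def')
  then show "p \<in> {(x + (n - 1)) mod n}" using modfact1[OF p(1)] by simp
next
  fix p assume x: "x < n" and "p \<in> {(x + (n - 1)) mod n}"
  then show "p \<in> pre a {x}" using modfact2[OF x] n3 by (auto simp: pre_a_def')
qed

lemma pre_a_co: "pre a ({..<n} - T) = {..<n} - pre a T"
  using n3 by (auto simp: pre_a_def')

lemma pre_a_2: "pre a {2} = {1}"
proof -
  have "(2 + (n - 1)) mod n = 1"
  proof -
    have e: "2 + (n - 1) = 1 + n" using n3 by simp
    have "(2 + (n - 1)) mod n = (1 + n) mod n" by (simp only: e)
    also have "\<dots> = 1 mod n" by (rule mod_add_self2)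
    finally show ?thesis using n3 by simp
  qed
  then show ?thesis using pre_a_single[of 2] n3 by simp
qed

lemma pre_a_1: "pre a {1} = {0}"
  using pre_a_single[of 1] n3 by simp

lemma pre_a_top: "pre a {n - 1} = {n - 2}"
proof -
  have "(n - 1 + (n - 1)) mod n = n - 2"
  proof -
    have e: "n - 1 + (n - 1) = (n - 2) + 1 * n" using n3 by simp
    have "(n - 1 + (n - 1)) mod n = ((n - 2) + 1 * n) mod n" by (simp only: e)
    also have "\<dots> = (n - 2) mod n" by (rule mod_mult_self1)
    also have "\<dots> = n - 2" using n3 by simp
    finally show ?thesis .
  qed
  then show ?thesis using pre_a_single[of "n - 1"] n3 by simp
qed

lemma pre_a_empty: "pre a {} = {}" by (simp add: pre_def)

lemma reach_top0: "reach (m - 1, {n - 1})"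
proof -
  have "reach (m - 2, {})" using up_k[of "m - 2" "{}"] reach_init postA_iter_empty by simp
  from reach_tr[OF this, of a] show ?thesis by (simp add: tr_a_top pre_a_empty)
qed

lemma reach_hub0: "reach (0, {n - 2})"
  using reach_tr[OF reach_top0, of a] unfolding tr_a_wrap pre_a_top .

lemma HH_single_step: "2 \<le> t \<Longrightarrow> Suc t \<le> n - 2 \<Longrightarrow> HH {Suc t} = {t}"
  apply (rule set_eqI)
  subgoal for p using HH_sub[of "{Suc t}"] by (cases "p < n") (auto simp: HH_mem)
  done

lemma HH_single_2: "HH {2} = {0}"
  apply (rule set_eqI)
  subgoal for p using HH_sub[of "{2}"] n3 by (cases "p < n") (auto simp: HH_mem)
  done

lemma HH_single_0: "HH {0} = {n - 1}"
  apply (rule set_eqI)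
  subgoal for p using HH_sub[of "{0}"] n3 by (cases "p < n") (auto simp: HH_mem)
  done

lemma hub_single:
  assumes n4: "4 \<le> n" and t: "t < n" "t \<noteq> 1"
  shows "reach (0, {t})"
proof -
  have mid: "i \<le> n - 4 \<Longrightarrow> reach (0, {n - 2 - i})" for i
  proof (induction i)
    case 0
    then show ?case using reach_hub0 by simp
  next
    case (Suc i)
    have e: "Suc (n - 2 - Suc i) = n - 2 - i" using Suc.prems n4 by simp
    have r: "reach (0, {Suc (n - 2 - Suc i)})" unfolding e using Suc by simp
    have "HH {Suc (n - 2 - Suc i)} = {n - 2 - Suc i}"
      using Suc.prems n4 by (intro HH_single_step) auto
    then show ?case using reach_HH[OF r] by simp
  qed
  have e2: "n - 2 - (n - 4) = 2" using n4 by simp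
  have two: "reach (0, {2})" using mid[of "n - 4"] unfolding e2 by simp
  consider "t = 0" | "t = n - 1" | "2 \<le> t" "t \<le> n - 2" using t by linarith
  then show ?thesis
  proof cases
    case 1
    then show ?thesis using reach_HH[OF two] HH_single_2 by simp
  next
    case 2
    then show ?thesis using reach_HH[OF reach_HH[OF two]] HH_single_2 HH_single_0 by simp
  next
    case 3
    then have "n - 2 - (n - 2 - t) = t" by simp
    then show ?thesis using mid[of "n - 2 - t"] 3 n4 by simp
  qed
qed

end


context ctx
begin

definition CC :: "nat set" where "CC = {..<n} - {1}"

lemma pre_c_1top: "pre c {1, n - 1} = {1}"
  using n3 by (auto simp: pre_def)

lemma pre_b_0top: "pre b {0, n - 1} = {1, n - 1}"
  using n3 by (auto simp: pre_def)

lemma pre_c_CC: "pre c CC = CC"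
  using n3 by (auto simp: pre_def CC_def)

lemma pre_b_co0: "pre b ({..<n} - {0}) = {..<n} - {1}"
  using n3 by (auto simp: pre_def)

lemma pre_a_1': "pre a {Suc 0} = {0}" using pre_a_1 by simp

lemma mod_m1: "m mod n = 1 \<Longrightarrow> (m - 1) mod n = 0"
proof -
  assume h: "m mod n = 1"
  have "m = Suc (m - 1)" using m3 by simp
  then have "Suc (m - 1) mod n = 1" using h by simp
  then show ?thesis by (auto simp: mod_Suc split: if_splits)
qed

lemma iter2: "(postA ^^ (m - 2)) {2} = {m mod n}"
proof -
  have "2 + (m - 2) = m" using m3 by simp
  then show ?thesis using postA_iter_single[of 2 "m - 2"] n3 by simp
qed

lemma iter1: "(postA ^^ (m - 2)) {1} = {(m - 1) mod n}"
proof -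
  have "1 + (m - 2) = m - 1" using m3 by simp
  then show ?thesis using postA_iter_single[of 1 "m - 2"] n3 by simp
qed

lemma iter2c: "(postA ^^ (m - 2)) ({..<n} - {2}) = {..<n} - {m mod n}"
proof -
  have "2 + (m - 2) = m" using m3 by simp
  then show ?thesis using postA_iter_co[of 2 "m - 2"] n3 by simp
qed

lemma iter1c: "(postA ^^ (m - 2)) ({..<n} - {1}) = {..<n} - {(m - 1) mod n}"
proof -
  have "1 + (m - 2) = m - 1" using m3 by simp
  then show ?thesis using postA_iter_co[of 1 "m - 2"] n3 by simp
qed

lemma reach_m2: "S \<subseteq> {..<n} \<Longrightarrow> reach (0, (postA ^^ (m - 2)) S) \<Longrightarrow> reach (m - 2, S)"
  using up_k[of "m - 2" S] by simp

lemma step_top: "reach (m - 2, S) \<Longrightarrow> reach (m - 1, pre a S \<union> {n - 1})"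
  using reach_tr[of "(m - 2, S)" a] unfolding tr_a_top by simp

lemma step_c: "reach (m - 1, S) \<Longrightarrow> reach (0, pre c S)"
  using reach_tr[of "(m - 1, S)" c] unfolding tr_c_top by simp

lemma step_b: "reach (m - 1, S) \<Longrightarrow> reach (m - 1, pre b S \<union> {n - 1})"
  using reach_tr[of "(m - 1, S)" b] unfolding tr_b_top by simp

lemma hub_one: "reach (0, {1})"
proof (cases "n = 3")
  case True
  then show ?thesis using reach_hub0 by simp
next
  case False
  then have n4: "4 \<le> n" using n3 by simp
  show ?thesis
  proof (cases "m mod n = 1")
    case False
    have "reach (0, {m mod n})" using hub_single[OF n4, of "m mod n"] False n3 by simp
    then have "reach (m - 2, {2})" using reach_m2[of "{2}"] iter2 n3 by simp
    then have "reach (m - 1, pre a {2} \<union> {n - 1})" by (rule step_top)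
    then have "reach (m - 1, {1, n - 1})" by (simp add: pre_a_2 insert_commute)
    then show ?thesis using step_c pre_c_1top by fastforce
  next
    case True
    have "reach (0, {0})" using hub_single[OF n4, of 0] n3 by simp
    then have "reach (m - 2, {1})" using reach_m2[of "{1}"] iter1 mod_m1[OF True] n3 by simp
    then have "reach (m - 1, pre a {1} \<union> {n - 1})" by (rule step_top)
    then have "reach (m - 1, {0, n - 1})" by (simp add: pre_a_1' insert_commute)
    then have "reach (m - 1, pre b {0, n - 1} \<union> {n - 1})" by (rule step_b)
    then have "reach (m - 1, {1, n - 1})" unfolding pre_b_0top by (simp add: insert_commute)
    then show ?thesis using step_c pre_c_1top by fastforce
  qed
qed

lemma hub_with1: "U \<subseteq> {..<n} \<Longrightarrow> 1 \<in> U \<Longrightarrow> reach (0, U)"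
  by (rule REG[OF hub_one]) (use n3 elt_props in auto)

lemma hub_CC: "reach (0, CC)"
proof (cases "m mod n = 1")
  case False
  have "reach (0, {..<n} - {m mod n})" using hub_with1 False n3 by simp
  then have "reach (m - 2, {..<n} - {2})" using reach_m2[of "{..<n} - {2}"] iter2c by simp
  then have "reach (m - 1, pre a ({..<n} - {2}) \<union> {n - 1})" by (rule step_top)
  moreover have "pre a ({..<n} - {2}) \<union> {n - 1} = CC"
    using n3 by (auto simp: pre_a_co pre_a_2 CC_def)
  ultimately have "reach (m - 1, CC)" by simp
  then show ?thesis using step_c pre_c_CC by fastforce
next
  case True
  have "reach (0, {..<n} - {0})" using hub_with1 n3 by simp
  then have "reach (m - 2, {..<n} - {1})" using reach_m2[of "{..<n} - {1}"] iter1c mod_m1[OF True] by simp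
  then have "reach (m - 1, pre a ({..<n} - {1}) \<union> {n - 1})" by (rule step_top)
  moreover have "pre a ({..<n} - {1}) \<union> {n - 1} = {..<n} - {0}"
    using n3 by (auto simp: pre_a_co pre_a_1 pre_a_1')
  ultimately have "reach (m - 1, {..<n} - {0})" by simp
  then have "reach (m - 1, pre b ({..<n} - {0}) \<union> {n - 1})" by (rule step_b)
  moreover have "pre b ({..<n} - {0}) \<union> {n - 1} = CC"
    using n3 by (auto simp: pre_b_co0 CC_def)
  ultimately have "reach (m - 1, CC)" by simp
  then show ?thesis using step_c pre_c_CC by fastforce
qed

lemma hub_all: "U \<subseteq> {..<n} \<Longrightarrow> reach (0, U)"
proof (cases "1 \<in> U")
  case True
  assume "U \<subseteq> {..<n}"
  then show ?thesis using hub_with1 True by simp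
next
  case False
  assume U: "U \<subseteq> {..<n}"
  show ?thesis
    by (rule REG[OF hub_CC]) (use n3 elt_props U False in \<open>auto simp: CC_def\<close>)
qed

lemma reach_valid: "valid e \<Longrightarrow> reach e"
proof (cases e)
  case (Pair q S)
  assume v: "valid e"
  then have q: "q < m" and S: "S \<subseteq> {..<n}" and top: "q = m - 1 \<Longrightarrow> n - 1 \<in> S"
    using Pair by (auto simp: valid_def)
  show ?thesis
  proof (cases "q = m - 1")
    case False
    then have "q \<le> m - 2" using q by simp
    then have "reach (q, S)" using up_k[of q S] S hub_all[OF postA_iter_sub[OF S]] by simp
    then show ?thesis using Pair by simp
  next
    case True
    have "reach (m - 2, postA S)" using up_k[of "m - 2" "postA S"] postA_sub hub_all postA_iter_sub by simp
    then have "reach (m - 1, S)" using top True S by (intro ctx.top) (auto simp: ctx_axioms)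
    then show ?thesis using Pair True by simp
  qed
qed

end


context ctx
begin

lemma X_full: "e \<in> X \<Longrightarrow> snd e = Full \<Longrightarrow> e = (0, Full)"
  by (cases e) (auto simp: X_def FullS_def Vset_valid valid_def)

lemma lower:
  assumes D: "is_dfa Q q0 \<delta> F" and lang: "dfa_lang q0 \<delta> F = L"
  shows "card X \<le> card Q"
proof -
  define wd where "wd e = (SOME w. run (0, {}) w = e)" for e
  have wd: "e \<in> X \<Longrightarrow> run (0, {}) (wd e) = e" for e
  proof -
    assume "e \<in> X"
    then have "reach e" using reach_valid X_valid by blast
    then show ?thesis unfolding wd_def reach_def by (rule someI_ex)
  qed
  define \<phi> where "\<phi> e = foldl \<delta> q0 (wd e)" for e
  have fQ: "q \<in> Q \<Longrightarrow> foldl \<delta> q w \<in> Q" for q w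
    using D by (induction w arbitrary: q) (auto simp: is_dfa_def)
  have q0: "q0 \<in> Q" using D by (simp add: is_dfa_def)
  have sub: "\<phi> ` X \<subseteq> Q" using fQ[OF q0] by (auto simp: \<phi>_def)
  have acc: "e \<in> X \<Longrightarrow> (wd e @ z \<in> L) = (0 \<in> snd (run e z))" for e z
  proof -
    assume e: "e \<in> X"
    have "wd e @ z \<in> L \<longleftrightarrow> 0 \<in> sw (wd e @ z)" by (rule in_L)
    also have "sw (wd e @ z) = snd (run (0, {}) (wd e @ z))" by (simp add: run_sem)
    also have "run (0, {}) (wd e @ z) = run e z" by (simp add: run_append wd[OF e])
    finally show ?thesis .
  qed
  have inj: "inj_on \<phi> X"
  proof (rule inj_onI)
    fix e1 e2 assume e1: "e1 \<in> X" and e2: "e2 \<in> X" and eq: "\<phi> e1 = \<phi> e2"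
    have I: "indist e1 e2" unfolding indist_def
    proof
      fix z
      have "foldl \<delta> q0 (wd e1 @ z) = foldl \<delta> q0 (wd e2 @ z)" using eq by (simp add: \<phi>_def)
      then have "(wd e1 @ z \<in> dfa_lang q0 \<delta> F) = (wd e2 @ z \<in> dfa_lang q0 \<delta> F)" by (simp add: dfa_lang_def)
      then show "(0 \<in> snd (run e1 z)) = (0 \<in> snd (run e2 z))" using acc[OF e1] acc[OF e2] lang by simp
    qed
    have v1: "valid e1" and v2: "valid e2" using e1 e2 X_valid by auto
    have S: "snd e1 = snd e2" using indist_snd[OF I] v1 v2 by (auto simp: valid_def)
    show "e1 = e2"
    proof (cases "snd e1 = Full")
      case True
      then show ?thesis using X_full[OF e1] X_full[OF e2] S by simp
    next
      case False
      show ?thesis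
      proof (rule ccontr)
        assume ne: "e1 \<noteq> e2"
        then have "fst e1 \<noteq> fst e2" using S by (metis prod.expand)
        moreover have "indist (fst e1, snd e1) (fst e2, snd e1)" using I S by (metis prod.collapse)
        moreover have "valid (fst e1, snd e1)" "valid (fst e2, snd e1)" using v1 v2 S by (metis prod.collapse)+
        ultimately show False using distinct_q False by blast
      qed
    qed
  qed
  have "finite Q" using D by (simp add: is_dfa_def)
  then show ?thesis using card_inj_on_le[OF inj sub] by simp
qed

lemma sc_main: "state_complexity L = card X"
  unfolding state_complexity_def
proof (rule Least_equality)
  show "\<exists>Q q0 \<delta> F. is_dfa Q q0 \<delta> F \<and> card Q = card X \<and> dfa_lang q0 \<delta> F = L" by (rule upper)
next
  fix k assume "\<exists>Q q0 \<delta> F. is_dfa Q q0 \<delta> F \<and> card Q = k \<and> dfa_lang q0 \<delta> F = L"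
  then show "card X \<le> k" using lower by blast
qed

end

theorem theorem4:
  fixes m n :: nat
  assumes "m \<ge> 3" and "n \<ge> 3"
  shows "state_complexity (conc (U_lang m) (reversal (U_lang n)))
           = (m - 1) * 2 ^ n + 2 ^ (n - 1) - (m - 1)"
proof -
  interpret ctx m n using assms by unfold_locales
  have "state_complexity L = card X" by (rule sc_main)
  then show ?thesis by (simp add: L_def card_X)
qed


end
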